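(* For every integer $n\geq 1$, the polynomial $Q_n(x,y,z,t)$ satisfies the identity of polynomials $$Q_n(x,y,z,t)=Q_n(x+nz+nt,\,y,\,-t,\,-z).$$
   Context: The polynomials $Q_n=Q_n(x,y,z,t)\in\mathbb{Z}[x,y,z,t]$ are defined by $Q_1=1$ and, for $n\geq 1$, $$Q_{n+1}=\bigl[x+nz+(y+t)\bigl(n+y\,\partial_y\bigr)\bigr]Q_n,$$ where $\partial_y$ denotes partial differentiation with respect to $y$. *)

theory Defs
  imports "HOL-Computational_Algebra.Polynomial"
begin

text \<open>Z[x,y,z,t] is represented by nested univariate polynomials:
  innermost variable x, then z, then t, outermost variable y
  (so that the partial derivative in y is pderiv).\<close>

type_synonym mpoly4 = "int poly poly poly poly"

definition varX :: mpoly4 where "varX = [:[:[:[:0, 1:]:]:]:]"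
definition varZ :: mpoly4 where "varZ = [:[:[:0, 1:]:]:]"
definition varT :: mpoly4 where "varT = [:[:0, 1:]:]"
definition varY :: mpoly4 where "varY = [:0, 1:]"

definition dY :: "mpoly4 \<Rightarrow> mpoly4" where "dY p = pderiv p"

text \<open>Simultaneous substitution x := a, y := b, z := c, t := d.\<close>
definition eval4 :: "mpoly4 \<Rightarrow> mpoly4 \<Rightarrow> mpoly4 \<Rightarrow> mpoly4 \<Rightarrow> mpoly4 \<Rightarrow> mpoly4" where
  "eval4 a b c d p =
     poly (map_poly (\<lambda>c3. poly (map_poly (\<lambda>c2. poly (map_poly (\<lambda>c1. poly (map_poly of_int c1) a) c2) c) c3) d) p) b"

text \<open>Q 0 is an unused dummy value; Q 1 = 1 and
  Q (n+1) = [x + n z + (y+t)(n + y d/dy)] Q n for n >= 1.\<close>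
fun Q :: "nat \<Rightarrow> mpoly4" where
  "Q 0 = 0"
| "Q (Suc 0) = 1"
| "Q (Suc (Suc m)) =
     (let n = of_nat (Suc m) :: mpoly4; q = Q (Suc m) in
      varX * q + n * varZ * q + (varY + varT) * (n * q + varY * dY q))"

end

theory Submission
  imports Defs
begin

definition rhom :: "('a::comm_ring_1 \<Rightarrow> 'b::comm_ring_1) \<Rightarrow> bool" where
  "rhom f \<longleftrightarrow> (\<forall>a b. f (a + b) = f a + f b) \<and> (\<forall>a b. f (a * b) = f a * f b) \<and> f 1 = 1"

lemma rhom_add: "rhom f \<Longrightarrow> f (a + b) = f a + f b" by (simp add: rhom_def)
lemma rhom_mult: "rhom f \<Longrightarrow> f (a * b) = f a * f b" by (simp add: rhom_def)
lemma rhom_1: "rhom f \<Longrightarrow> f 1 = 1" by (simp add: rhom_def)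
lemma rhom_0: "rhom f \<Longrightarrow> f 0 = 0"
proof -
  assume h: "rhom f"
  have "f (0 + 0) = f 0 + f 0" using h by (rule rhom_add)
  then show ?thesis by simp
qed
lemma rhom_uminus: "rhom f \<Longrightarrow> f (- a) = - f a"
proof -
  assume h: "rhom f"
  have "f (- a) + f a = f 0" using h by (simp add: rhom_add[symmetric])
  then have "f (- a) + f a = 0" using h rhom_0 by simp
  then show ?thesis by (simp add: eq_neg_iff_add_eq_0)
qed
lemma rhom_diff: "rhom f \<Longrightarrow> f (a - b) = f a - f b"
  using rhom_add[of f a "- b"] rhom_uminus[of f b] by simp
lemma rhom_of_nat: "rhom f \<Longrightarrow> f (of_nat n) = of_nat n"
  by (induction n) (simp_all add: rhom_0 rhom_1 rhom_add)
lemma rhom_of_int: "rhom (f :: 'a::comm_ring_1 \<Rightarrow> 'b::comm_ring_1) \<Longrightarrow> f (of_int i) = of_int i"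
proof -
  assume h: "rhom f"
  show ?thesis
  proof (cases "i \<ge> 0")
    case True
    then have "i = int (nat i)" by simp
    then have "(of_int i :: 'a) = of_nat (nat i)" "(of_int i :: 'b) = of_nat (nat i)"
      by (metis of_int_of_nat_eq)+
    then show ?thesis using h by (simp add: rhom_of_nat)
  next
    case False
    then have "i = - int (nat (- i))" by simp
    then have "(of_int i :: 'a) = - of_nat (nat (- i))" "(of_int i :: 'b) = - of_nat (nat (- i))"
      by (metis of_int_minus of_int_of_nat_eq)+
    then show ?thesis using h by (simp add: rhom_of_nat rhom_uminus)
  qed
qed

lemma rhom_comp: "rhom f \<Longrightarrow> rhom g \<Longrightarrow> rhom (\<lambda>x. g (f x))"
  by (simp add: rhom_def)

lemma rhom_poly: "rhom (\<lambda>p. poly p x)"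
  by (simp add: rhom_def)

lemma rhom_of_int_fun: "rhom (of_int :: int \<Rightarrow> 'a::comm_ring_1)"
  by (simp add: rhom_def)

lemma rhom_map_poly:
  assumes h: "rhom f"
  shows "rhom (map_poly f)"
proof -
  have f0: "f 0 = 0" using h by (rule rhom_0)
  have add: "map_poly f (p + q) = map_poly f p + map_poly f q" for p q
    by (intro poly_eqI) (simp add: coeff_map_poly f0 rhom_add[OF h])
  have mult: "map_poly f (p * q) = map_poly f p * map_poly f q" for p q
  proof (induction p rule: pCons_induct)
    case 0
    then show ?case by simp
  next
    case (pCons a p)
    have "map_poly f (pCons a p * q) = map_poly f (smult a q) + map_poly f (pCons 0 (p * q))"
      by (simp add: add)
    also have "\<dots> = smult (f a) (map_poly f q) + pCons 0 (map_poly f p * map_poly f q)"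
      by (simp add: map_poly_smult f0 rhom_mult[OF h] map_poly_pCons pCons.IH)
    also have "\<dots> = map_poly f (pCons a p) * map_poly f q"
      by (simp add: map_poly_pCons f0)
    finally show ?case .
  qed
  show ?thesis unfolding rhom_def using add mult rhom_1[OF h] by simp
qed

lemma hom_poly_map:
  assumes h: "rhom psi" and f0: "f 0 = 0"
  shows "psi (poly (map_poly f p) x) = poly (map_poly (\<lambda>c. psi (f c)) p) (psi x)"
proof (induction p rule: pCons_induct)
  case 0
  then show ?case by (simp add: rhom_0[OF h])
next
  case (pCons a p)
  have g0: "psi (f 0) = 0" using f0 rhom_0[OF h] by simp
  show ?case using pCons.IH
    by (simp add: map_poly_pCons f0 rhom_0[OF h] rhom_add[OF h] rhom_mult[OF h])
qed

lemma rhom_eval4: "rhom (eval4 a b c d)"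
proof -
  let ?F1 = "\<lambda>c1. poly (map_poly of_int c1) a"
  let ?F2 = "\<lambda>c2. poly (map_poly ?F1 c2) c"
  let ?F3 = "\<lambda>c3. poly (map_poly ?F2 c3) d"
  have h1: "rhom ?F1"
    by (rule rhom_comp[OF rhom_map_poly[OF rhom_of_int_fun] rhom_poly])
  have h2: "rhom ?F2"
    by (rule rhom_comp[OF rhom_map_poly[OF h1] rhom_poly])
  have h3: "rhom ?F3"
    by (rule rhom_comp[OF rhom_map_poly[OF h2] rhom_poly])
  have h4: "rhom (\<lambda>p. poly (map_poly ?F3 p) b)"
    by (rule rhom_comp[OF rhom_map_poly[OF h3] rhom_poly])
  show ?thesis unfolding eval4_def[abs_def] using h4 by simp
qed

lemma eval4_comp:
  assumes h: "rhom psi"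
  shows "psi (eval4 a b c d p) = eval4 (psi a) (psi b) (psi c) (psi d) p"
proof -
  let ?F1 = "\<lambda>c1. poly (map_poly of_int c1) a"
  let ?F2 = "\<lambda>c2. poly (map_poly ?F1 c2) c"
  let ?F3 = "\<lambda>c3. poly (map_poly ?F2 c3) d"
  let ?G1 = "\<lambda>c1. poly (map_poly of_int c1) (psi a)"
  let ?G2 = "\<lambda>c2. poly (map_poly ?G1 c2) (psi c)"
  let ?G3 = "\<lambda>c3. poly (map_poly ?G2 c3) (psi d)"
  have e1: "psi (?F1 u) = ?G1 u" for u
    by (subst hom_poly_map[OF h]) (simp_all add: rhom_of_int[OF h])
  have e2: "psi (?F2 u) = ?G2 u" for u
    by (subst hom_poly_map[OF h]) (simp_all add: e1)
  have e3: "psi (?F3 u) = ?G3 u" for u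
    by (subst hom_poly_map[OF h]) (simp_all add: e2)
  show ?thesis unfolding eval4_def
    by (subst hom_poly_map[OF h]) (simp_all add: e3)
qed

lemma pderiv_poly_const:
  assumes hF: "rhom F" and dF: "\<And>u. pderiv (F u :: mpoly4) = 0" and dD: "pderiv D = 0"
  shows "pderiv (poly (map_poly F c) D) = 0"
proof (induction c rule: pCons_induct)
  case 0
  then show ?case by simp
next
  case (pCons a p)
  show ?case using pCons.IH
    by (simp add: map_poly_pCons rhom_0[OF hF] pderiv_add pderiv_mult dF dD)
qed

lemma pderiv_eval_Y:
  assumes hF: "rhom F" and dF: "\<And>u. pderiv (F u :: mpoly4) = 0"
  shows "pderiv (poly (map_poly F p) varY) = poly (map_poly F (pderiv p)) varY"
proof (induction p rule: pCons_induct)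
  case 0
  then show ?case by simp
next
  case (pCons a p)
  have madd: "map_poly F (u + v) = map_poly F u + map_poly F v" for u v
    using rhom_add[OF rhom_map_poly[OF hF]] .
  have "pderiv (poly (map_poly F (pCons a p)) varY)
      = pderiv (F a + varY * poly (map_poly F p) varY)"
    by (simp add: map_poly_pCons rhom_0[OF hF])
  also have "\<dots> = poly (map_poly F p) varY + varY * poly (map_poly F (pderiv p)) varY"
    using pCons.IH by (simp add: pderiv_add pderiv_mult dF varY_def pderiv_pCons)
  also have "\<dots> = poly (map_poly F (pderiv (pCons a p))) varY"
    by (simp add: pderiv_pCons madd map_poly_pCons rhom_0[OF hF])
  finally show ?case .
qed

lemma eval4_pderiv:
  assumes da: "pderiv a = 0" and dc: "pderiv c = 0" and dd: "pderiv d = 0"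
  shows "eval4 a varY c d (pderiv p) = pderiv (eval4 a varY c d p)"
proof -
  let ?F1 = "\<lambda>c1. poly (map_poly of_int c1) a"
  let ?F2 = "\<lambda>c2. poly (map_poly ?F1 c2) c"
  let ?F3 = "\<lambda>c3. poly (map_poly ?F2 c3) d"
  have h1: "rhom ?F1"
    by (rule rhom_comp[OF rhom_map_poly[OF rhom_of_int_fun] rhom_poly])
  have h2: "rhom ?F2"
    by (rule rhom_comp[OF rhom_map_poly[OF h1] rhom_poly])
  have h3: "rhom ?F3"
    by (rule rhom_comp[OF rhom_map_poly[OF h2] rhom_poly])
  have d0: "pderiv (of_int i :: mpoly4) = 0" for i
    by (simp add: of_int_poly)
  have d1: "pderiv (?F1 u) = 0" for u
    by (rule pderiv_poly_const[OF rhom_of_int_fun d0 da])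
  have d2: "pderiv (?F2 u) = 0" for u
    by (rule pderiv_poly_const[OF h1 d1 dc])
  have d3: "pderiv (?F3 u) = 0" for u
    by (rule pderiv_poly_const[OF h2 d2 dd])
  show ?thesis unfolding eval4_def
    by (rule pderiv_eval_Y[OF h3 d3, symmetric])
qed

lemma eval4_vars:
  "eval4 a b c d varX = a" "eval4 a b c d varY = b"
  "eval4 a b c d varZ = c" "eval4 a b c d varT = d"
  by (simp_all add: eval4_def varX_def varY_def varZ_def varT_def map_poly_pCons)

definition th :: "mpoly4 \<Rightarrow> mpoly4" where "th q = varY * pderiv q"

lemma th_add: "th (a + b) = th a + th b" by (simp add: th_def pderiv_add algebra_simps)
lemma th_diff: "th (a - b) = th a - th b" by (simp add: th_def pderiv_diff algebra_simps)
lemma th_minus: "th (- a) = - th a" by (simp add: th_def pderiv_minus)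
lemma th_mult: "th (a * b) = th a * b + a * th b" by (simp add: th_def pderiv_mult algebra_simps)
lemma pd_vars: "pderiv varX = 0" "pderiv varZ = 0" "pderiv varT = 0" "pderiv varY = 1"
  by (simp_all add: varX_def varY_def varZ_def varT_def pderiv_pCons)
lemma th_vars: "th varX = 0" "th varZ = 0" "th varT = 0" "th varY = varY" "th (of_nat n) = 0"
  "th 1 = 0" "th 0 = 0"
  by (simp_all add: th_def pd_vars)

lemma th_numeral: "th (numeral w) = 0"
  by (metis th_vars(5) of_nat_numeral)

lemma th_eval4:
  assumes da: "pderiv a = 0" and dc: "pderiv c = 0" and dd: "pderiv d = 0"
  shows "eval4 a varY c d (th p) = th (eval4 a varY c d p)"
  unfolding th_def
  by (simp add: rhom_mult[OF rhom_eval4] eval4_vars eval4_pderiv[OF da dc dd])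


definition Dop :: "nat \<Rightarrow> mpoly4 \<Rightarrow> mpoly4" where
  "Dop n q = varX * q + of_nat n * varZ * q + (varY + varT) * (of_nat n * q + th q)"
definition Eop :: "nat \<Rightarrow> mpoly4 \<Rightarrow> mpoly4" where
  "Eop n q = varX * q + of_nat (Suc n) * varZ * q + varT * q + (varY - varZ) * (of_nat n * q + th q)"
definition Sh :: "mpoly4 \<Rightarrow> mpoly4" where
  "Sh p = eval4 (varX + varZ + varT) varY varZ varT p"
definition Sg :: "nat \<Rightarrow> mpoly4 \<Rightarrow> mpoly4" where
  "Sg n p = eval4 (varX + of_nat n * varZ + of_nat n * varT) varY (- varT) (- varZ) p"
definition Mq :: "nat \<Rightarrow> mpoly4" where
  "Mq n = Sh (Q n) - Q n"

lemma Q_rec: "Q (Suc (Suc m)) = Dop (Suc m) (Q (Suc m))"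
  by (simp add: Dop_def th_def dY_def Let_def)

lemma Sh_Dop: "Sh (Dop n q) = Dop n (Sh q) + (varZ + varT) * Sh q"
proof -
  have d: "pderiv (varX + varZ + varT) = 0"
    by (simp add: pderiv_add pd_vars)
  show ?thesis
    unfolding Dop_def Sh_def
    apply (simp only: rhom_add[OF rhom_eval4] rhom_mult[OF rhom_eval4] rhom_of_nat[OF rhom_eval4]
        eval4_vars th_eval4[OF d pd_vars(2) pd_vars(3)])
    apply (simp add: algebra_simps)
    done
qed

lemma Dop_diff: "Dop n (a - b) = Dop n a - Dop n b"
  by (simp add: Dop_def th_diff algebra_simps)
lemma Eop_add: "Eop n (a + b) = Eop n a + Eop n b"
  by (simp add: Eop_def th_add algebra_simps)

lemma M_rec: "Mq (Suc (Suc k)) = Dop (Suc k) (Mq (Suc k)) + (varZ + varT) * Mq (Suc k) + (varZ + varT) * Q (Suc k)"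
  unfolding Mq_def Q_rec Sh_Dop Dop_diff by (simp add: algebra_simps)

lemma Sh_1: "Sh 1 = 1"
  unfolding Sh_def by (rule rhom_1[OF rhom_eval4])

lemma J: "(varZ + varT) * (of_nat k * Q (Suc k) + th (Q (Suc k))) = Eop (Suc k) (Mq (Suc k))"
proof (induction k)
  case 0
  then show ?case by (simp add: Mq_def Sh_1 Eop_def th_vars)
next
  case (Suc k)
  define q where "q = Q (Suc k)"
  define m where "m = Mq (Suc k)"
  have IH: "(varZ + varT) * (of_nat k * q + th q) = Eop (Suc k) m"
    using Suc.IH by (simp add: q_def m_def)
  have key: "(varZ + varT) * (of_nat (Suc k) * Dop (Suc k) q + th (Dop (Suc k) q))
      - Eop (Suc (Suc k)) (Dop (Suc k) m + (varZ + varT) * m + (varZ + varT) * q)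
      = Dop (Suc k) ((varZ + varT) * (of_nat k * q + th q) - Eop (Suc k) m)
        + (varY + varZ + varT) * ((varZ + varT) * (of_nat k * q + th q) - Eop (Suc k) m)"
    apply (simp add: Dop_def Eop_def th_add th_mult th_diff th_vars th_numeral)
    apply (simp add: algebra_simps)
    done
  have "(varZ + varT) * (of_nat (Suc k) * Dop (Suc k) q + th (Dop (Suc k) q))
      = Eop (Suc (Suc k)) (Dop (Suc k) m + (varZ + varT) * m + (varZ + varT) * q)"
    using key IH by (simp add: Dop_def th_vars)
  then show ?case unfolding Q_rec M_rec q_def m_def .
qed


lemma pd_args: "pderiv (varX + of_nat n * varZ + of_nat n * varT) = 0"
  "pderiv (- varT) = 0" "pderiv (- varZ) = 0"
  by (simp_all add: pderiv_add pderiv_mult pderiv_minus pd_vars)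

lemma rhom_Sg: "rhom (Sg m)"
  unfolding Sg_def[abs_def] by (rule rhom_eval4)

lemma Sg_Sg: "Sg (Suc n) (Sg n p) = Sh p"
proof -
  have "Sg (Suc n) (Sg n p) = eval4 (Sg (Suc n) (varX + of_nat n * varZ + of_nat n * varT))
          (Sg (Suc n) varY) (Sg (Suc n) (- varT)) (Sg (Suc n) (- varZ)) p"
    unfolding Sg_def[of n] by (rule eval4_comp[OF rhom_Sg])
  also have "\<dots> = Sh p"
    unfolding Sh_def Sg_def
    by (simp add: rhom_add[OF rhom_eval4] rhom_mult[OF rhom_eval4] rhom_of_nat[OF rhom_eval4]
        rhom_uminus[OF rhom_eval4] eval4_vars algebra_simps)
  finally show ?thesis .
qed

lemma Sg_Dop: "Sg (Suc n) (Dop n q) = Eop n (Sg (Suc n) q)"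
  unfolding Dop_def Eop_def Sg_def
  apply (simp only: rhom_add[OF rhom_eval4] rhom_mult[OF rhom_eval4] rhom_of_nat[OF rhom_eval4]
        eval4_vars th_eval4[OF pd_args])
  apply (simp add: algebra_simps)
  done

lemma main: "Sg (Suc k) (Q (Suc k)) = Q (Suc k)"
proof (induction k)
  case 0
  then show ?case by (simp add: Sg_def rhom_1[OF rhom_eval4])
next
  case (Suc k)
  define q where "q = Q (Suc k)"
  define m where "m = Mq (Suc k)"
  have IH: "Sg (Suc k) q = q" using Suc.IH by (simp add: q_def)
  have J': "(varZ + varT) * (of_nat k * q + th q) = Eop (Suc k) m"
    using J[of k] by (simp add: q_def m_def)
  have sq: "Sg (Suc (Suc k)) q = q + m"
  proof -
    have "Sg (Suc (Suc k)) q = Sg (Suc (Suc k)) (Sg (Suc k) q)" by (simp add: IH)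
    also have "\<dots> = Sh q" by (rule Sg_Sg)
    finally show ?thesis by (simp add: m_def Mq_def q_def)
  qed
  have "Sg (Suc (Suc k)) (Q (Suc (Suc k))) = Eop (Suc k) (q + m)"
    by (simp only: Q_rec Sg_Dop q_def[symmetric] sq)
  also have "\<dots> = Eop (Suc k) q + (varZ + varT) * (of_nat k * q + th q)"
    by (simp add: Eop_add J')
  also have "\<dots> = Dop (Suc k) q"
    by (simp add: Eop_def Dop_def algebra_simps)
  also have "\<dots> = Q (Suc (Suc k))"
    by (simp only: Q_rec q_def)
  finally show ?case .
qed

theorem theorem1p1:
  fixes n :: nat
  assumes "n \<ge> 1"
  shows "Q n = eval4 (varX + of_nat n * varZ + of_nat n * varT) varY (- varT) (- varZ) (Q n)"
proof -
  obtain k where k: "n = Suc k" using assms by (cases n) auto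
  show ?thesis using main[of k] unfolding k Sg_def by simp
qed

end
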